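(* For all Borel probability measures $\mu,\nu$ on $\mathbb{R}$, $$d_{Ku}(\mu,\nu)=\max\{|\mu(I)-\nu(I)| : I\in\mathcal{I}_0\},$$ i.e. the maximum is attained.
   Context: $\mathcal{I}_0$ denotes the set of all non-empty connected subsets of $\mathbb{R}$ (intervals, possibly degenerate single points, possibly unbounded). With $f_\mu(t)=\mu((-\infty,t])$, the Kuiper distance is $d_{Ku}(\mu,\nu)=\sup_{t}(f_\mu(t)-f_\nu(t))+\sup_t(f_\nu(t)-f_\mu(t))$, which equals $\sup\{|\mu(I)-\nu(I)|: I \text{ a non-degenerate interval of }\mathbb{R}\}$. *)

theory Defs
  imports "HOL-Probability.Probability"
begin

definition cdf_of :: "real measure \<Rightarrow> real \<Rightarrow> real" where
  "cdf_of M t = measure M {..t}"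

definition kuiper_dist :: "real measure \<Rightarrow> real measure \<Rightarrow> real" where
  "kuiper_dist M N =
     (SUP t. cdf_of M t - cdf_of N t) + (SUP t. cdf_of N t - cdf_of M t)"

definition I0 :: "real set set" where
  "I0 = {I. I \<noteq> {} \<and> connected I}"

end

theory Submission
  imports Defs
begin

definition dcl :: "real set \<Rightarrow> bool" where
  "dcl L \<longleftrightarrow> (\<forall>x y. x \<le> y \<longrightarrow> y \<in> L \<longrightarrow> x \<in> L)"

lemma dcl_rep:
  assumes "dcl L"
  shows "\<exists>s. (incseq s \<and> L = (\<Union>n. {..s n})) \<or> (decseq s \<and> L = (\<Inter>n. {..s n}))"
proof (cases "L = UNIV")
  case True
  have "(\<Union>n. {..real n}) = UNIV"
    by (auto, meson atMost_iff real_arch_simple)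
  moreover have "incseq (\<lambda>n. real n)" by (simp add: incseq_def)
  ultimately show ?thesis using True by blast
next
  case nU: False
  show ?thesis
  proof (cases "L = {}")
    case True
    have "(\<Inter>n. {..- real n}) = {}"
    proof -
      have "x \<notin> (\<Inter>n. {..- real n})" for x :: real
      proof -
        obtain n where "-x < real n" using reals_Archimedean2 by blast
        then have "\<not> x \<le> - real n" by linarith
        then show ?thesis by blast
      qed
      then show ?thesis by blast
    qed
    moreover have "decseq (\<lambda>n. - real n)" by (simp add: decseq_def)
    ultimately show ?thesis using True by blast
  next
    case nE: False
    obtain z where z: "z \<notin> L" using nU by blast
    have ub: "\<And>y. y \<in> L \<Longrightarrow> y \<le> z"
      using assms z unfolding dcl_def by (meson linear)
    hence bdd: "bdd_above L" by (auto simp: bdd_above_def)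
    define t where "t = Sup L"
    have le: "\<And>y. y \<in> L \<Longrightarrow> y \<le> t" using bdd t_def cSup_upper by blast
    have lt: "\<And>x. x < t \<Longrightarrow> x \<in> L"
    proof -
      fix x assume "x < t"
      then obtain y where "y \<in> L" "x < y" using less_cSup_iff[OF nE bdd] t_def by auto
      then show "x \<in> L" using assms unfolding dcl_def by (meson less_imp_le)
    qed
    show ?thesis
    proof (cases "t \<in> L")
      case True
      have "L = (\<Union>n. {..(\<lambda>n. t) n})"
        using True le assms unfolding dcl_def by auto
      moreover have "incseq (\<lambda>n::nat. t)" by (simp add: incseq_def)
      ultimately show ?thesis by blast
    next
      case False
      define s where "s n = t - inverse (real (Suc n))" for n
      have "incseq s" unfolding s_def incseq_def
        by (auto intro!: le_imp_inverse_le)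
      moreover have "L = (\<Union>n. {..s n})"
      proof
        show "L \<subseteq> (\<Union>n. {..s n})"
        proof
          fix x assume "x \<in> L"
          then have "x < t" using le False by (metis order_le_less)
          then obtain n where "inverse (real (Suc n)) < t - x"
            using reals_Archimedean[of "t - x"] by auto
          then show "x \<in> (\<Union>n. {..s n})" unfolding s_def by (auto intro!: exI[of _ n])
        qed
        show "(\<Union>n. {..s n}) \<subseteq> L"
        proof
          fix x assume "x \<in> (\<Union>n. {..s n})"
          then obtain n where "x \<le> t - inverse (real (Suc n))" unfolding s_def by auto
          moreover have "0 < inverse (real (Suc n))" by simp
          ultimately have "x < t" by linarith
          then show "x \<in> L" using lt by blast
        qed
      qed
      ultimately show ?thesis by blast
    qed
  qed
qed

lemma dcl_lim:
  fixes s :: "nat \<Rightarrow> real"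
  assumes M: "prob_space M" "sets M = sets borel"
  assumes "(incseq s \<and> L = (\<Union>n. {..s n})) \<or> (decseq s \<and> L = (\<Inter>n. {..s n}))"
  shows "(\<lambda>n. measure M {..s n}) \<longlonglongrightarrow> measure M L"
proof -
  interpret prob_space M by fact
  have c: "\<And>n. {..s n} \<in> sets borel" by simp
  have r: "range (\<lambda>n. {..s n}) \<subseteq> sets M" unfolding M(2) using c by blast
  show ?thesis
    using assms(3)
  proof
    assume a: "incseq s \<and> L = (\<Union>n. {..s n})"
    have "incseq (\<lambda>n. {..s n})" using a unfolding incseq_def by (meson atMost_subset_iff)
    from finite_Lim_measure_incseq[OF r this] show ?thesis using a by (simp only:)
  next
    assume a: "decseq s \<and> L = (\<Inter>n. {..s n})"
    have "decseq (\<lambda>n. {..s n})" using a unfolding decseq_def by (meson atMost_subset_iff)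
    from finite_Lim_measure_decseq[OF r this] show ?thesis using a by (simp only:)
  qed
qed

lemma dcl_borel:
  fixes s :: "nat \<Rightarrow> real"
  assumes "(incseq s \<and> L = (\<Union>n. {..s n})) \<or> (decseq s \<and> L = (\<Inter>n. {..s n}))"
  shows "L \<in> sets borel"
proof -
  have c: "\<And>n. {..s n} \<in> sets borel" by simp
  have "(\<Union>n. {..s n}) \<in> sets borel" using c by blast
  have "(\<Inter>n. {..s n}) \<in> sets borel" by (intro borel_closed closed_INT) auto
  then show ?thesis using assms \<open>(\<Union>n. {..s n}) \<in> sets borel\<close> by auto
qed

lemma dcl_diff_lim:
  fixes s :: "nat \<Rightarrow> real"
  assumes M: "prob_space M" "sets M = sets borel"
      and N: "prob_space N" "sets N = sets borel"
  assumes "(incseq s \<and> L = (\<Union>n. {..s n})) \<or> (decseq s \<and> L = (\<Inter>n. {..s n}))"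
  shows "(\<lambda>n. measure M {..s n} - measure N {..s n}) \<longlonglongrightarrow> measure M L - measure N L"
  by (intro tendsto_diff dcl_lim[OF M assms(5)] dcl_lim[OF N assms(5)])

lemma bddh:
  fixes M N :: "real measure"
  assumes M: "prob_space M" and N: "prob_space N"
  shows "bdd_above (range (\<lambda>t. measure M {..t} - measure N {..t}))"
proof -
  have "measure M {..t} - measure N {..t} \<le> 1" for t :: real
  proof -
    have "measure M {..t} \<le> 1" using prob_space.prob_le_1[OF M] .
    moreover have "0 \<le> measure N {..t}" by (rule measure_nonneg)
    ultimately show ?thesis by linarith
  qed
  then show ?thesis by (auto simp: bdd_above_def)
qed

lemma dcl_bound:
  assumes M: "prob_space M" "sets M = sets borel"
      and N: "prob_space N" "sets N = sets borel"
      and "dcl L"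
  shows "measure M L - measure N L \<le> (SUP t. measure M {..t} - measure N {..t})"
proof -
  obtain s where s: "(incseq s \<and> L = (\<Union>n. {..s n})) \<or> (decseq s \<and> L = (\<Inter>n. {..s n}))"
    using dcl_rep[OF assms(5)] by blast
  show ?thesis
    apply (rule LIMSEQ_le_const2[OF dcl_diff_lim[OF M N s]])
    using cSUP_upper[OF _ bddh[OF M(1) N(1)]] by blast
qed

lemma dcl_attain:
  assumes M: "prob_space M" "sets M = sets borel"
      and N: "prob_space N" "sets N = sets borel"
  shows "\<exists>L. dcl L \<and> measure M L - measure N L = (SUP t. measure M {..t} - measure N {..t})"
proof -
  define h where "h t = measure M {..t} - measure N {..t}" for t
  define a where "a = (SUP t. h t)"
  have bdd: "bdd_above (range h)" unfolding h_def using bddh[OF M(1) N(1)] .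
  have "\<forall>n. \<exists>t. a - inverse (real (Suc n)) < h t"
  proof
    fix n
    have "a - inverse (real (Suc n)) < a" by simp
    then show "\<exists>t. a - inverse (real (Suc n)) < h t"
      unfolding a_def using less_cSUP_iff[OF _ bdd] by auto
  qed
  then obtain s where s: "\<And>n. a - inverse (real (Suc n)) < h (s n)" by metis
  obtain f where f: "strict_mono f" "monoseq (\<lambda>n. s (f n))" using seq_monosub by blast
  define u where "u n = s (f n)" for n
  have low: "a - inverse (real (Suc n)) \<le> h (u n)" for n
  proof -
    have "n \<le> f n" using seq_suble[OF f(1)] by simp
    hence "inverse (real (Suc (f n))) \<le> inverse (real (Suc n))"
      by (intro le_imp_inverse_le) auto
    then show ?thesis using s[of "f n"] unfolding u_def by linarith
  qed
  have up: "h (u n) \<le> a" for n unfolding a_def using cSUP_upper[OF _ bdd] by blast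
  have lima: "(\<lambda>n. h (u n)) \<longlonglongrightarrow> a"
  proof (rule tendsto_sandwich[of "\<lambda>n. a - inverse (real (Suc n))" _ _ "\<lambda>n. a"])
    show "\<forall>\<^sub>F n in sequentially. a - inverse (real (Suc n)) \<le> h (u n)" using low by simp
    show "\<forall>\<^sub>F n in sequentially. h (u n) \<le> a" using up by simp
    show "(\<lambda>n. a - inverse (real (Suc n))) \<longlonglongrightarrow> a"
      using tendsto_diff[OF tendsto_const LIMSEQ_inverse_real_of_nat, of a] by simp
  qed simp
  have mu: "incseq u \<or> decseq u" using f(2) monoseq_iff unfolding u_def by blast
  then obtain L where L: "(incseq u \<and> L = (\<Union>n. {..u n})) \<or> (decseq u \<and> L = (\<Inter>n. {..u n}))"
    by blast
  have "dcl L" using L unfolding dcl_def by (auto intro: order_trans)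
  moreover have "measure M L - measure N L = a"
    using LIMSEQ_unique[OF dcl_diff_lim[OF M N L] lima[unfolded h_def]] .
  ultimately show ?thesis unfolding a_def h_def by blast
qed

lemma dcl_total: "dcl A \<Longrightarrow> dcl B \<Longrightarrow> A \<subseteq> B \<or> B \<subseteq> A"
  unfolding dcl_def by (meson linear subsetI)

lemma dcl_diff_conn:
  assumes "dcl A" "dcl B" shows "connected (B - A)"
proof -
  have "is_interval (B - A)"
    unfolding is_interval_1 using assms unfolding dcl_def by blast
  then show ?thesis using is_interval_connected_1 by blast
qed

lemma dcl_sets: "dcl L \<Longrightarrow> L \<in> sets borel"
  using dcl_rep dcl_borel by blast

theorem lemma2p1:
  fixes M N :: "real measure"
  assumes "prob_space M" and "sets M = sets borel"
      and "prob_space N" and "sets N = sets borel"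
  shows "(\<exists>I\<in>I0. \<bar>measure M I - measure N I\<bar> = kuiper_dist M N)
       \<and> (\<forall>I\<in>I0. \<bar>measure M I - measure N I\<bar> \<le> kuiper_dist M N)"
proof -
  note M = assms(1,2) and N = assms(3,4)
  interpret Mp: prob_space M by fact
  interpret Np: prob_space N by fact
  define a where "a = (SUP t. measure M {..t} - measure N {..t})"
  define b where "b = (SUP t. measure N {..t} - measure M {..t})"
  have K: "kuiper_dist M N = a + b"
    unfolding kuiper_dist_def cdf_of_def a_def b_def ..
  have rng: "- b \<le> measure M L - measure N L \<and> measure M L - measure N L \<le> a" if "dcl L" for L
    using dcl_bound[OF M N that] dcl_bound[OF N M that] unfolding a_def b_def by linarith
  have diffm: "measure M (B - A) - measure N (B - A) =
      (measure M B - measure N B) - (measure M A - measure N A)" if "dcl A" "dcl B" "A \<subseteq> B" for A B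
  proof -
    have "A \<in> sets M" "B \<in> sets M" "A \<in> sets N" "B \<in> sets N"
      using dcl_sets that M N by auto
    then show ?thesis using Mp.finite_measure_Diff Np.finite_measure_Diff that(3) by simp
  qed
  have upper: "\<forall>I\<in>I0. \<bar>measure M I - measure N I\<bar> \<le> a + b"
  proof
    fix I assume "I \<in> I0"
    then have ne: "I \<noteq> {}" and iv: "is_interval I"
      unfolding I0_def using is_interval_connected_1 by auto
    define B where "B = {x. \<exists>y\<in>I. x \<le> y}"
    define A where "A = {x. \<forall>y\<in>I. x < y}"
    have dA: "dcl A" "dcl B" unfolding dcl_def A_def B_def
      by (auto intro: order_trans order_le_less_trans)
    have sub: "A \<subseteq> B" using ne unfolding A_def B_def by force
    have "I = B - A"
    proof
      show "I \<subseteq> B - A" unfolding A_def B_def by force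
      show "B - A \<subseteq> I"
      proof
        fix x assume "x \<in> B - A"
        then obtain y z where "y \<in> I" "x \<le> y" "z \<in> I" "z \<le> x"
          unfolding A_def B_def by (auto simp: not_less)
        then show "x \<in> I" using iv unfolding is_interval_1 by blast
      qed
    qed
    then show "\<bar>measure M I - measure N I\<bar> \<le> a + b"
      using diffm[OF dA sub] rng[OF dA(1)] rng[OF dA(2)] by (simp add: abs_le_iff)
  qed
  obtain L where L: "dcl L" "measure M L - measure N L = a"
    using dcl_attain[OF M N] unfolding a_def by blast
  obtain L' where L': "dcl L'" "measure N L' - measure M L' = b"
    using dcl_attain[OF N M] unfolding b_def by blast
  have ex: "\<exists>I\<in>I0. \<bar>measure M I - measure N I\<bar> = a + b"
  proof (cases "a + b = 0")
    case True
    have "{0::real} \<in> I0" unfolding I0_def by auto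
    then show ?thesis using upper True by (metis abs_ge_zero order_antisym)
  next
    case False
    have "dcl {}" unfolding dcl_def by simp
    from rng[OF this] have ab: "a \<ge> 0" "b \<ge> 0" by simp_all
    show ?thesis
    proof (cases "L \<subseteq> L'")
      case True
      have v: "measure M (L' - L) - measure N (L' - L) = - b - a"
        using diffm[OF L(1) L'(1) True] L L' by simp
      have "L' - L \<noteq> {}"
      proof
        assume "L' - L = {}"
        then have "- b - a = 0" using v by (metis diff_self measure_empty)
        then show False using False ab by linarith
      qed
      then have "L' - L \<in> I0" unfolding I0_def using dcl_diff_conn L L' by auto
      then show ?thesis using v ab by (intro bexI[of _ "L' - L"]) auto
    next
      case nF: False
      then have sub: "L' \<subseteq> L" using dcl_total[OF L(1) L'(1)] by blast
      have v: "measure M (L - L') - measure N (L - L') = a + b"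
        using diffm[OF L'(1) L(1) sub] L L' by simp
      have "L - L' \<noteq> {}"
      proof
        assume "L - L' = {}"
        then have "a + b = 0" using v by (metis diff_self measure_empty)
        then show False using False ab by linarith
      qed
      then have "L - L' \<in> I0" unfolding I0_def using dcl_diff_conn L L' by auto
      then show ?thesis using v ab by (intro bexI[of _ "L - L'"]) auto
    qed
  qed
  show ?thesis using ex upper K by simp
qed

end
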